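(* Let $(Q,\cdot)$ be a quasigroup satisfying $(xx)(yz)=(x(xy))z$ for all $x,y,z\in Q$ (an LC1-quasigroup). Then $Q$ satisfies $x(y(yz))=(x(yy))z$ for all $x,y,z\in Q$ (i.e. $Q$ is an LC4-quasigroup).
   Context: A quasigroup is a set $Q$ with a binary operation $\cdot$ (written as juxtaposition) such that for all $a,b\in Q$ each of the equations $ax=b$ and $ya=b$ has a unique solution in $Q$. *)

theory Defs
  imports Main
begin

definition quasigroup :: "('a \<Rightarrow> 'a \<Rightarrow> 'a) \<Rightarrow> bool" where
  "quasigroup mult \<longleftrightarrow>
     (\<forall>a b. (\<exists>!x. mult a x = b) \<and> (\<exists>!y. mult y a = b))"

end

theory Submission
  imports Defs
begin

lemma core:
  fixes m :: "'a \<Rightarrow> 'a \<Rightarrow> 'a" and ld rd :: "'a \<Rightarrow> 'a \<Rightarrow> 'a"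
  assumes a1: "\<And>x y. m x (ld x y) = y" and a2: "\<And>x y. ld x (m x y) = y"
  and a3: "\<And>x y. m (rd y x) x = y" and a4: "\<And>x y. rd (m y x) x = y"
  and lc: "\<And>x y z. m (m x x) (m y z) = m (m x (m x y)) z"
  shows "m x (m y (m y z)) = m (m x (m y y)) z"
proof -
  have le: "m (ld u u) z = z" for u z
  proof -
    have "m (m u u) (m (ld u u) z) = m (m u u) z"
      using lc[of u "ld u u" z] a1[of u u] by simp
    then show ?thesis by (metis a2)
  qed
  have e2: "m x (ld u u) = x" for x u
  proof -
    have "ld u u = ld x x"
      using a4[of "ld u u" x] a4[of "ld x x" x] le[of u x] le[of x x] by simp
    then show ?thesis using a1[of x x] by simp
  qed
  have la: "m (m x x) y = m x (m x y)" for x y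
    using lc[of x y "ld x x"] e2 by simp
  define e where "e = ld x x"
  have e2': "\<And>a. m a e = a" unfolding e_def using e2 by blast
  show ?thesis by (metis a2 a3 e2' lc)
qed

theorem mainTheorem9:
  fixes mult :: "'a \<Rightarrow> 'a \<Rightarrow> 'a"
  assumes "quasigroup mult"
    and "\<forall>x y z. mult (mult x x) (mult y z) = mult (mult x (mult x y)) z"
  shows "\<forall>x y z. mult x (mult y (mult y z)) = mult (mult x (mult y y)) z"
proof (intro allI)
  fix x y z
  define ld where "ld a b = (THE c. mult a c = b)" for a b
  define rd where "rd b a = (THE c. mult c a = b)" for a b
  have q1: "\<And>a b. \<exists>!c. mult a c = b" and q2: "\<And>a b. \<exists>!c. mult c a = b"
    using assms(1) unfolding quasigroup_def by auto
  have a1: "\<And>a b. mult a (ld a b) = b"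
    unfolding ld_def by (rule theI'[OF q1])
  have a2: "\<And>a b. ld a (mult a b) = b"
    unfolding ld_def by (rule the1_equality[OF q1]) (rule refl)
  have a3: "\<And>a b. mult (rd b a) a = b"
    unfolding rd_def by (rule theI'[OF q2])
  have a4: "\<And>a b. rd (mult b a) a = b"
    unfolding rd_def by (rule the1_equality[OF q2]) (rule refl)
  show "mult x (mult y (mult y z)) = mult (mult x (mult y y)) z"
    by (rule core[OF a1 a2 a3 a4]) (use assms(2) in simp)
qed

end
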